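(* For every constant $k$, the asymptotic approximation ratio achieved by any deterministic online width-$k$ algorithm for unweighted max-sat with input model 0 is strictly less than $2/3$.
   Context: Unweighted max-sat: the input is a set of clauses (sets of literals), each of weight 1; the goal is an assignment maximizing the number of satisfied clauses. Online: variables arrive one at a time in adversarial order and each must be irrevocably assigned upon arrival. In input model 0, the data item of a variable consists only of a list of names and weights of the clauses in which it appears positively and a list of names and weights of the clauses in which it appears negatively. Width-$k$ model: the algorithm maintains a tree of partial assignments with the empty assignment as root at level 0; when the $i$-th variable is processed, each node at level $i-1$ gets at least one child (no cutting allowed), each child extending its parent by a value for that variable; every level has at most $k$ nodes; at the end the best complete assignment is output. The asymptotic approximation ratio of $\mathbb{A}$ is $\liminf_{n}\inf_{I\in\mathcal{I}_n} v(\mathbb{A},I)/v(I)$, where $\mathcal{I}_n$ are the instances of size $n$. *)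

theory Defs
  imports Complex_Main "HOL-Library.Extended_Real" "HOL-Library.Liminf_Limsup"
begin

text \<open>A data item in input model 0 (unweighted, all weights 1): the set of names of the
  clauses in which the variable occurs positively, and the set of names of the clauses in
  which it occurs negatively. An instance is the list of data items in arrival order
  (the i-th variable is the i-th item); its size is the number of variables.\<close>

type_synonym item = "nat set \<times> nat set"

definition valid_instance :: "item list \<Rightarrow> bool" where
  "valid_instance ds \<longleftrightarrow>
     (\<forall>d \<in> set ds. finite (fst d) \<and> finite (snd d) \<and> fst d \<inter> snd d = {})"

text \<open>A deterministic online width-k algorithm: after seeing the first i data items it has
  the set of nodes (partial assignments of length i) at level i of its tree.\<close>

definition width_alg :: "nat \<Rightarrow> (item list \<Rightarrow> bool list set) \<Rightarrow> bool" where
  "width_alg k A \<longleftrightarrow>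
     A [] = {[]} \<and>
     (\<forall>ds. finite (A ds) \<and> card (A ds) \<le> k) \<and>
     (\<forall>ds d. A (ds @ [d]) \<subseteq> {ys @ [b] | ys b. ys \<in> A ds} \<and>
            (\<forall>ys \<in> A ds. \<exists>b. ys @ [b] \<in> A (ds @ [d])))"

definition sat_count :: "item list \<Rightarrow> bool list \<Rightarrow> nat" where
  "sat_count ds a = card {c. \<exists>i < length ds.
      (a ! i \<and> c \<in> fst (ds ! i)) \<or> (\<not> a ! i \<and> c \<in> snd (ds ! i))}"

definition alg_value :: "(item list \<Rightarrow> bool list set) \<Rightarrow> item list \<Rightarrow> nat" where
  "alg_value A ds = Max (sat_count ds ` A ds)"

definition opt_value :: "item list \<Rightarrow> nat" where
  "opt_value ds = Max (sat_count ds ` {a. length a = length ds})"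

definition ratio :: "(item list \<Rightarrow> bool list set) \<Rightarrow> item list \<Rightarrow> real" where
  "ratio A ds = (if opt_value ds = 0 then 1 else real (alg_value A ds) / real (opt_value ds))"

definition asymp_ratio :: "(item list \<Rightarrow> bool list set) \<Rightarrow> ereal" where
  "asymp_ratio A =
     liminf (\<lambda>n. INF ds \<in> {ds. valid_instance ds \<and> length ds = n}. ereal (ratio A ds))"

end

theory Submission
  imports Defs
begin

definition cov :: "item list \<Rightarrow> bool list \<Rightarrow> nat set" where
  "cov ds a = {c. \<exists>i < length ds.
      (a ! i \<and> c \<in> fst (ds ! i)) \<or> (\<not> a ! i \<and> c \<in> snd (ds ! i))}"

lemma sat_count_cov: "sat_count ds a = card (cov ds a)"
  by (simp add: sat_count_def cov_def)

lemma cov_snoc: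
  assumes "length a = length ds"
  shows "cov (ds @ [d]) (a @ [b]) = cov ds a \<union> (if b then fst d else snd d)"
proof -
  have "c \<in> cov (ds @ [d]) (a @ [b]) \<longleftrightarrow> c \<in> cov ds a \<union> (if b then fst d else snd d)" for c
  proof
    assume "c \<in> cov (ds @ [d]) (a @ [b])"
    then obtain i where i: "i < Suc (length ds)"
      "((a@[b]) ! i \<and> c \<in> fst ((ds@[d]) ! i)) \<or> (\<not> (a@[b]) ! i \<and> c \<in> snd ((ds@[d]) ! i))"
      by (auto simp: cov_def)
    show "c \<in> cov ds a \<union> (if b then fst d else snd d)"
    proof (cases "i < length ds")
      case True
      then show ?thesis using i assms by (auto simp: cov_def nth_append)
    next
      case False
      then have "i = length ds" using i by simp
      then show ?thesis using i assms by (auto simp: nth_append)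
    qed
  next
    assume c: "c \<in> cov ds a \<union> (if b then fst d else snd d)"
    show "c \<in> cov (ds @ [d]) (a @ [b])"
    proof (cases "c \<in> cov ds a")
      case True
      then obtain i where "i < length ds"
        "(a ! i \<and> c \<in> fst (ds ! i)) \<or> (\<not> a ! i \<and> c \<in> snd (ds ! i))"
        by (auto simp: cov_def)
      then show ?thesis using assms unfolding cov_def
        by (auto simp: nth_append intro!: exI[of _ i])
    next
      case False
      then have "c \<in> (if b then fst d else snd d)" using c by simp
      then show ?thesis using assms unfolding cov_def
        by (cases b) (auto simp: nth_append intro!: exI[of _ "length ds"])
    qed
  qed
  then show ?thesis by blast
qed

lemma cov_sub:
  assumes "\<forall>d\<in>set ds. fst d \<subseteq> U \<and> snd d \<subseteq> U"
  shows "cov ds a \<subseteq> U"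
  using assms by (auto simp: cov_def dest!: nth_mem)

locale walg =
  fixes k :: nat and A :: "item list \<Rightarrow> bool list set"
  assumes W: "width_alg k A"
begin

lemma A_nil: "A [] = {[]}" using W by (simp add: width_alg_def)
lemma A_fin: "finite (A ds)" using W by (simp add: width_alg_def)
lemma A_card: "card (A ds) \<le> k" using W by (simp add: width_alg_def)
lemma A_step: "a' \<in> A (ds @ [d]) \<Longrightarrow> \<exists>a b. a' = a @ [b] \<and> a \<in> A ds"
  using W unfolding width_alg_def by blast
lemma A_child: "a \<in> A ds \<Longrightarrow> \<exists>b. a @ [b] \<in> A (ds @ [d])"
  using W unfolding width_alg_def by blast

lemma A_len: "a \<in> A ds \<Longrightarrow> length a = length ds"
proof (induction ds arbitrary: a rule: rev_induct)
  case Nil then show ?case using A_nil by simp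
next
  case (snoc d ds)
  then obtain a0 b where "a = a0 @ [b]" "a0 \<in> A ds" using A_step by blast
  then show ?case using snoc.IH by simp
qed

lemma A_ne: "A ds \<noteq> {}"
proof (induction ds rule: rev_induct)
  case Nil then show ?case using A_nil by simp
next
  case (snoc d ds)
  then obtain a where "a \<in> A ds" by blast
  then show ?case using A_child by blast
qed

lemma k_pos: "1 \<le> k" using A_card[of "[]"] A_nil by simp

lemma card_lift:
  assumes Q: "Q \<subseteq> A ds" and Q': "Q' \<subseteq> A (ds @ [d])"
    and h: "\<And>a b. a \<in> Q \<Longrightarrow> a @ [b] \<in> A (ds @ [d]) \<Longrightarrow> a @ [b] \<in> Q'"
  shows "card Q \<le> card Q'"
proof -
  have "Q \<subseteq> butlast ` Q'"
  proof
    fix a assume "a \<in> Q"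
    then obtain b where "a @ [b] \<in> A (ds @ [d])" using A_child Q by blast
    then have "a @ [b] \<in> Q'" using h \<open>a \<in> Q\<close> by blast
    then show "a \<in> butlast ` Q'" by (metis butlast_snoc image_eqI)
  qed
  moreover have "finite Q'" using Q' A_fin finite_subset by blast
  ultimately show ?thesis by (meson card_image_le card_mono finite_imageI le_trans)
qed


end

type_synonym obj = "nat \<times> nat \<times> nat"

definition lv :: "obj \<Rightarrow> nat" where "lv ob = fst ob"
definition sd :: "obj \<Rightarrow> nat" where "sd ob = fst (snd ob)"
definition td :: "obj \<Rightarrow> nat" where "td ob = snd (snd ob)"

lemma obj_simps[simp]: "lv (l,s,t) = l" "sd (l,s,t) = s" "td (l,s,t) = t"
  by (simp_all add: lv_def sd_def td_def)

definition rel :: "nat set \<Rightarrow> obj \<Rightarrow> bool" where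
  "rel C ob = ((sd ob \<in> C) \<noteq> (td ob \<in> C))"

definition side :: "(obj \<Rightarrow> bool) \<Rightarrow> obj \<Rightarrow> nat" where
  "side f ob = (if f ob then sd ob else td ob)"

lemma rel_cong: "sd ob \<notin> Y \<Longrightarrow> td ob \<notin> Y \<Longrightarrow> rel (C \<union> Y) ob = rel C ob"
  by (auto simp: rel_def)

lemma aux_nonneg: "0 \<le> (1 - 1 / (4::real) ^ n) / 3"
proof -
  have a: "(1::real) \<le> 4 ^ n" by (rule one_le_power) simp
  have "1 / (4::real) ^ n \<le> 1" using a by simp
  then show ?thesis by simp
qed

lemma aux_rec: "4 * ((1 - 1 / (4::real) ^ Suc n) / 3) = 1 + (1 - 1 / 4 ^ n) / 3"
proof -
  have p: "(0::real) < 4 ^ n" by simp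
  show ?thesis using p by (simp add: field_simps)
qed

context walg
begin

definition cc :: "nat \<Rightarrow> real" where "cc i = (1 - 1 / 4 ^ (k - i)) / 3"

lemma cc_nonneg: "0 \<le> cc i"
  unfolding cc_def by (rule aux_nonneg)

lemma cc_rec: assumes "i < k" shows "4 * cc i = 1 + cc (Suc i)"
proof -
  have e: "k - i = Suc (k - Suc i)" using assms by simp
  show ?thesis unfolding cc_def e by (rule aux_rec)
qed

definition tm :: "nat set \<Rightarrow> obj \<Rightarrow> real" where
  "tm C ob = (if rel C ob then cc (lv ob) else 0)"

lemma tm_nonneg: "0 \<le> tm C ob" by (simp add: tm_def cc_nonneg)

lemma tm_cong: "sd ob \<notin> Y \<Longrightarrow> td ob \<notin> Y \<Longrightarrow> tm (C \<union> Y) ob = tm C ob"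
  by (simp add: tm_def rel_cong)

definition pot :: "item list \<Rightarrow> obj set \<Rightarrow> bool list \<Rightarrow> real" where
  "pot ds P a = real (card (cov ds a)) + (\<Sum>ob\<in>P. tm (cov ds a) ob)"

definition Inv :: "item list \<Rightarrow> obj set \<Rightarrow> nat \<Rightarrow> nat \<Rightarrow> bool" where
  "Inv ds P S X \<longleftrightarrow>
    (\<forall>d\<in>set ds. fst d \<subseteq> {..<2*S} \<and> snd d \<subseteq> {..<2*S} \<and> fst d \<inter> snd d = {}) \<and>
    finite P \<and> (\<forall>ob\<in>P. sd ob < 2*S \<and> td ob < 2*S \<and> sd ob \<noteq> td ob) \<and>
    (\<forall>ob\<in>P. \<forall>ob2\<in>P. ob \<noteq> ob2 \<longrightarrow> {sd ob, td ob} \<inter> {sd ob2, td ob2} = {}) \<and>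
    (\<forall>a\<in>A ds. \<forall>ob\<in>P. sd ob \<in> cov ds a \<or> td ob \<in> cov ds a) \<and>
    (\<forall>ob\<in>P. lv ob \<le> card {a\<in>A ds. sd ob \<in> cov ds a \<and> td ob \<in> cov ds a}) \<and>
    (\<forall>a\<in>A ds. pot ds P a \<le> (1 + cc 0) * S + X) \<and>
    (\<forall>f. \<exists>\<sigma>. length \<sigma> = length ds \<and>
        (\<forall>c<2*S. c \<notin> side f ` P \<longrightarrow> c \<in> cov ds \<sigma>))"

lemma Inv_init: "Inv [] {} 0 0"
proof -
  have "cov [] [] = {}" by (simp add: cov_def)
  then show ?thesis unfolding Inv_def pot_def using A_nil by simp
qed

lemma Inv_cov_sub: "Inv ds P S X \<Longrightarrow> cov ds a \<subseteq> {..<2*S}"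
proof -
  assume "Inv ds P S X"
  then have "\<forall>d\<in>set ds. fst d \<subseteq> {..<2*S} \<and> snd d \<subseteq> {..<2*S}"
    unfolding Inv_def by simp
  then show ?thesis by (rule cov_sub)
qed

lemma Inv_cov_fin: "Inv ds P S X \<Longrightarrow> finite (cov ds a)"
  by (rule finite_subset[OF Inv_cov_sub]) simp_all


lemma InvD:
  assumes "Inv ds P S X"
  shows "\<forall>d\<in>set ds. fst d \<subseteq> {..<2*S} \<and> snd d \<subseteq> {..<2*S} \<and> fst d \<inter> snd d = {}"
    "finite P" "\<forall>ob\<in>P. sd ob < 2*S \<and> td ob < 2*S \<and> sd ob \<noteq> td ob"
    "\<forall>ob\<in>P. \<forall>ob2\<in>P. ob \<noteq> ob2 \<longrightarrow> {sd ob, td ob} \<inter> {sd ob2, td ob2} = {}"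
    "\<forall>a\<in>A ds. \<forall>ob\<in>P. sd ob \<in> cov ds a \<or> td ob \<in> cov ds a"
    "\<forall>ob\<in>P. lv ob \<le> card {a\<in>A ds. sd ob \<in> cov ds a \<and> td ob \<in> cov ds a}"
    "\<forall>a\<in>A ds. pot ds P a \<le> (1 + cc 0) * S + X"
    "\<forall>f. \<exists>\<sigma>. length \<sigma> = length ds \<and> (\<forall>c<2*S. c \<notin> side f ` P \<longrightarrow> c \<in> cov ds \<sigma>)"
  using assms unfolding Inv_def by simp_all

lemma InvI:
  assumes "\<forall>d\<in>set ds. fst d \<subseteq> {..<2*S} \<and> snd d \<subseteq> {..<2*S} \<and> fst d \<inter> snd d = {}"
    "finite P" "\<forall>ob\<in>P. sd ob < 2*S \<and> td ob < 2*S \<and> sd ob \<noteq> td ob"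
    "\<forall>ob\<in>P. \<forall>ob2\<in>P. ob \<noteq> ob2 \<longrightarrow> {sd ob, td ob} \<inter> {sd ob2, td ob2} = {}"
    "\<forall>a\<in>A ds. \<forall>ob\<in>P. sd ob \<in> cov ds a \<or> td ob \<in> cov ds a"
    "\<forall>ob\<in>P. lv ob \<le> card {a\<in>A ds. sd ob \<in> cov ds a \<and> td ob \<in> cov ds a}"
    "\<forall>a\<in>A ds. pot ds P a \<le> (1 + cc 0) * S + X"
    "\<forall>f. \<exists>\<sigma>. length \<sigma> = length ds \<and> (\<forall>c<2*S. c \<notin> side f ` P \<longrightarrow> c \<in> cov ds \<sigma>)"
  shows "Inv ds P S X"
  unfolding Inv_def
  apply (intro conjI)
  by (fact assms)+

lemma sum_tm_cong:
  assumes "\<forall>ob\<in>P. sd ob \<notin> Y \<and> td ob \<notin> Y"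
  shows "(\<Sum>ob\<in>P. tm (C \<union> Y) ob) = (\<Sum>ob\<in>P. tm C ob)"
  using assms by (intro sum.cong) (simp_all add: tm_cong)

lemma cov_mono_step:
  assumes "length a = length ds"
  shows "cov ds a \<subseteq> cov (ds @ [d]) (a @ [b])"
  using cov_snoc[OF assms] by simp

lemma T_seed:
  assumes I: "Inv ds P S X"
  shows "Inv (ds @ [({2*S},{2*S+1})]) (insert (0,2*S,2*S+1) P) (Suc S) X"
proof -
  define d where "d = ({2*S},{2*S+1::nat})"
  define nw where "nw = ((0::nat),2*S,2*S+1)"
  note D = InvD[OF I]
  have cs: "cov ds a \<subseteq> {..<2*S}" for a using Inv_cov_sub[OF I] .
  have cf: "finite (cov ds a)" for a using Inv_cov_fin[OF I] .
  have nwP: "nw \<notin> P" using D(3) by (auto simp: nw_def)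
  have step: "\<exists>a b. a' = a @ [b] \<and> a \<in> A ds \<and> length a = length ds \<and>
      cov (ds @ [d]) a' = cov ds a \<union> {if b then 2*S else 2*S+1}"
    if a'A: "a' \<in> A (ds @ [d])" for a'
  proof -
    obtain a b where ab: "a' = a @ [b]" "a \<in> A ds" using A_step[OF a'A] by blast
    have l: "length a = length ds" using A_len ab(2) .
    have "cov (ds @ [d]) a' = cov ds a \<union> {if b then 2*S else 2*S+1}"
      unfolding ab(1) cov_snoc[OF l] by (simp add: d_def)
    then show ?thesis using ab l by blast
  qed
  show ?thesis
    unfolding d_def[symmetric] nw_def[symmetric]
  proof (rule InvI)
    show "\<forall>e\<in>set (ds @ [d]). fst e \<subseteq> {..<2 * Suc S} \<and> snd e \<subseteq> {..<2 * Suc S} \<and> fst e \<inter> snd e = {}"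
    proof
      fix e assume "e \<in> set (ds @ [d])"
      then consider "e \<in> set ds" | "e = d" by auto
      then show "fst e \<subseteq> {..<2 * Suc S} \<and> snd e \<subseteq> {..<2 * Suc S} \<and> fst e \<inter> snd e = {}"
      proof cases
        case 1
        then have "fst e \<subseteq> {..<2*S} \<and> snd e \<subseteq> {..<2*S} \<and> fst e \<inter> snd e = {}" using D(1) by blast
        moreover have "{..<2*S} \<subseteq> {..<2 * Suc S}" by simp
        ultimately show ?thesis by (meson subset_trans)
      next
        case 2 then show ?thesis by (simp add: d_def)
      qed
    qed
    show "finite (insert nw P)" using D(2) by simp
    show "\<forall>ob\<in>insert nw P. sd ob < 2 * Suc S \<and> td ob < 2 * Suc S \<and> sd ob \<noteq> td ob"
      using D(3) by (auto simp: nw_def)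
    show "\<forall>ob\<in>insert nw P. \<forall>ob2\<in>insert nw P. ob \<noteq> ob2 \<longrightarrow> {sd ob, td ob} \<inter> {sd ob2, td ob2} = {}"
    proof (intro ballI impI)
      fix ob ob2 assume o: "ob \<in> insert nw P" "ob2 \<in> insert nw P" "ob \<noteq> ob2"
      show "{sd ob, td ob} \<inter> {sd ob2, td ob2} = {}"
      proof (cases "ob = nw")
        case True
        then have "ob2 \<in> P" using o by auto
        then show ?thesis using D(3) True by (force simp: nw_def)
      next
        case False
        then have ob: "ob \<in> P" using o by auto
        show ?thesis
        proof (cases "ob2 = nw")
          case True
          then show ?thesis using D(3) ob by (force simp: nw_def)
        next
          case False
          then have "ob2 \<in> P" using o by auto
          then show ?thesis using D(4) ob o(3) by blast
        qed
      qed
    qed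
    show "\<forall>a\<in>A (ds @ [d]). \<forall>ob\<in>insert nw P. sd ob \<in> cov (ds @ [d]) a \<or> td ob \<in> cov (ds @ [d]) a"
    proof (intro ballI)
      fix a' ob assume a': "a' \<in> A (ds @ [d])" and ob: "ob \<in> insert nw P"
      obtain a b where ab: "a' = a @ [b]" "a \<in> A ds" "length a = length ds"
        "cov (ds @ [d]) a' = cov ds a \<union> {if b then 2*S else 2*S+1}" using step[OF a'] by blast
      show "sd ob \<in> cov (ds @ [d]) a' \<or> td ob \<in> cov (ds @ [d]) a'"
      proof (cases "ob = nw")
        case True then show ?thesis using ab(4) by (simp add: nw_def)
      next
        case False then have "ob \<in> P" using ob by simp
        then show ?thesis using D(5) ab by blast
      qed
    qed
    show "\<forall>ob\<in>insert nw P. lv ob \<le> card {a \<in> A (ds @ [d]). sd ob \<in> cov (ds @ [d]) a \<and> td ob \<in> cov (ds @ [d]) a}"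
    proof
      fix ob assume ob: "ob \<in> insert nw P"
      show "lv ob \<le> card {a \<in> A (ds @ [d]). sd ob \<in> cov (ds @ [d]) a \<and> td ob \<in> cov (ds @ [d]) a}"
      proof (cases "ob = nw")
        case True then show ?thesis by (simp add: nw_def)
      next
        case False then have obP: "ob \<in> P" using ob by simp
        have "card {a\<in>A ds. sd ob \<in> cov ds a \<and> td ob \<in> cov ds a}
              \<le> card {a \<in> A (ds @ [d]). sd ob \<in> cov (ds @ [d]) a \<and> td ob \<in> cov (ds @ [d]) a}"
        proof (rule card_lift)
          fix a b assume "a \<in> {a\<in>A ds. sd ob \<in> cov ds a \<and> td ob \<in> cov ds a}" "a @ [b] \<in> A (ds @ [d])"
          moreover then have "cov ds a \<subseteq> cov (ds @ [d]) (a @ [b])" using cov_mono_step A_len by blast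
          ultimately show "a @ [b] \<in> {a \<in> A (ds @ [d]). sd ob \<in> cov (ds @ [d]) a \<and> td ob \<in> cov (ds @ [d]) a}"
            by blast
        qed auto
        then show ?thesis using D(6) obP by (meson le_trans)
      qed
    qed
    show "\<forall>a\<in>A (ds @ [d]). pot (ds @ [d]) (insert nw P) a \<le> (1 + cc 0) * real (Suc S) + real X"
    proof
      fix a' assume a': "a' \<in> A (ds @ [d])"
      obtain a b where ab: "a' = a @ [b]" "a \<in> A ds" "length a = length ds"
        "cov (ds @ [d]) a' = cov ds a \<union> {if b then 2*S else 2*S+1}" using step[OF a'] by blast
      define x where "x = (if b then 2*S else 2*S+1)"
      have xn: "x \<notin> cov ds a" using cs[of a] by (auto simp: x_def)
      have c1: "card (cov (ds @ [d]) a') = Suc (card (cov ds a))"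
        unfolding ab(4) x_def[symmetric] using xn cf[of a] by simp
      have s1: "(\<Sum>ob\<in>P. tm (cov (ds @ [d]) a') ob) = (\<Sum>ob\<in>P. tm (cov ds a) ob)"
        unfolding ab(4) x_def[symmetric]
        by (rule sum_tm_cong) (use D(3) in \<open>auto simp: x_def\<close>)
      have t1: "tm (cov (ds @ [d]) a') nw = cc 0"
      proof -
        have "2*S \<notin> cov ds a" "2*S+1 \<notin> cov ds a" using cs[of a] by auto
        then have "rel (cov (ds @ [d]) a') nw" unfolding ab(4) rel_def nw_def by auto
        then show ?thesis by (simp add: tm_def nw_def)
      qed
      have "pot (ds @ [d]) (insert nw P) a' = pot ds P a + 1 + cc 0"
        unfolding pot_def using D(2) nwP c1 s1 t1 by simp
      moreover have "pot ds P a \<le> (1 + cc 0) * S + X" using D(7) ab(2) by blast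
      ultimately show "pot (ds @ [d]) (insert nw P) a' \<le> (1 + cc 0) * real (Suc S) + real X"
        by (simp add: algebra_simps)
    qed
    show "\<forall>f. \<exists>\<sigma>. length \<sigma> = length (ds @ [d]) \<and> (\<forall>c<2 * Suc S. c \<notin> side f ` insert nw P \<longrightarrow> c \<in> cov (ds @ [d]) \<sigma>)"
    proof
      fix f
      obtain \<sigma> where \<sigma>: "length \<sigma> = length ds" "\<forall>c<2*S. c \<notin> side f ` P \<longrightarrow> c \<in> cov ds \<sigma>"
        using D(8) by blast
      define \<sigma>' where "\<sigma>' = \<sigma> @ [\<not> f nw]"
      have cv: "cov (ds @ [d]) \<sigma>' = cov ds \<sigma> \<union> (if \<not> f nw then {2*S} else {2*S+1})"
        unfolding \<sigma>'_def cov_snoc[OF \<sigma>(1)] by (simp add: d_def)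
      have "\<forall>c<2 * Suc S. c \<notin> side f ` insert nw P \<longrightarrow> c \<in> cov (ds @ [d]) \<sigma>'"
      proof (intro allI impI)
        fix c assume c: "c < 2 * Suc S" "c \<notin> side f ` insert nw P"
        show "c \<in> cov (ds @ [d]) \<sigma>'"
        proof (cases "c < 2*S")
          case True
          then have "c \<in> cov ds \<sigma>" using \<sigma>(2) c(2) by blast
          then show ?thesis using cv by simp
        next
          case False
          then have "c = 2*S \<or> c = 2*S+1" using c(1) by auto
          moreover have "c \<noteq> side f nw" using c(2) by blast
          ultimately show ?thesis unfolding cv by (auto simp: side_def nw_def)
        qed
      qed
      then show "\<exists>\<sigma>. length \<sigma> = length (ds @ [d]) \<and> (\<forall>c<2 * Suc S. c \<notin> side f ` insert nw P \<longrightarrow> c \<in> cov (ds @ [d]) \<sigma>)"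
        using \<sigma>(1) by (intro exI[of _ \<sigma>']) (simp add: \<sigma>'_def)
    qed
  qed
qed


lemma card_lift_mono:
  assumes "\<And>a b. a \<in> A ds \<Longrightarrow> length a = length ds \<Longrightarrow> cov ds a \<subseteq> cov (ds @ [d]) (a @ [b])"
  shows "card {a\<in>A ds. s \<in> cov ds a \<and> t \<in> cov ds a}
          \<le> card {a \<in> A (ds @ [d]). s \<in> cov (ds @ [d]) a \<and> t \<in> cov (ds @ [d]) a}"
proof (rule card_lift)
  fix a b assume a: "a \<in> {a\<in>A ds. s \<in> cov ds a \<and> t \<in> cov ds a}" "a @ [b] \<in> A (ds @ [d])"
  then have "cov ds a \<subseteq> cov (ds @ [d]) (a @ [b])" using assms A_len by blast
  then show "a @ [b] \<in> {a \<in> A (ds @ [d]). s \<in> cov (ds @ [d]) a \<and> t \<in> cov (ds @ [d]) a}"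
    using a by blast
qed auto

lemma T_close:
  assumes I: "Inv ds P S X" and ob: "ob \<in> P" and x: "x = sd ob \<or> x = td ob"
    and hX: "X' = X + 1 \<or> (X' = X \<and> (\<forall>a\<in>A ds. x \<in> cov ds a))"
  shows "Inv (ds @ [({x},{})]) (P - {ob}) S X'"
proof -
  define d where "d = ({x},{}::nat set)"
  note D = InvD[OF I]
  have cs: "cov ds a \<subseteq> {..<2*S}" for a using Inv_cov_sub[OF I] .
  have cf: "finite (cov ds a)" for a using Inv_cov_fin[OF I] .
  have xS: "x < 2*S" using D(3) ob x by blast
  have oth: "\<forall>ob2\<in>P - {ob}. sd ob2 \<notin> {x} \<and> td ob2 \<notin> {x}"
  proof
    fix ob2 assume "ob2 \<in> P - {ob}"
    then have "{sd ob, td ob} \<inter> {sd ob2, td ob2} = {}" using D(4) ob by blast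
    then show "sd ob2 \<notin> {x} \<and> td ob2 \<notin> {x}" using x by blast
  qed
  have step: "\<exists>a b. a' = a @ [b] \<and> a \<in> A ds \<and> length a = length ds \<and>
      cov (ds @ [d]) a' = cov ds a \<union> (if b then {x} else {})"
    if a'A: "a' \<in> A (ds @ [d])" for a'
  proof -
    obtain a b where ab: "a' = a @ [b]" "a \<in> A ds" using A_step[OF a'A] by blast
    have l: "length a = length ds" using A_len ab(2) .
    have "cov (ds @ [d]) a' = cov ds a \<union> (if b then {x} else {})"
      unfolding ab(1) cov_snoc[OF l] by (simp add: d_def)
    then show ?thesis using ab l by blast
  qed
  show ?thesis
    unfolding d_def[symmetric]
  proof (rule InvI)
    show "\<forall>e\<in>set (ds @ [d]). fst e \<subseteq> {..<2 * S} \<and> snd e \<subseteq> {..<2 * S} \<and> fst e \<inter> snd e = {}"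
      using D(1) xS by (auto simp: d_def)
    show "finite (P - {ob})" using D(2) by simp
    show "\<forall>ob\<in>P - {ob}. sd ob < 2 * S \<and> td ob < 2 * S \<and> sd ob \<noteq> td ob"
      using D(3) by blast
    show "\<forall>oa\<in>P - {ob}. \<forall>ob2\<in>P - {ob}. oa \<noteq> ob2 \<longrightarrow> {sd oa, td oa} \<inter> {sd ob2, td ob2} = {}"
      using D(4) by blast
    show "\<forall>a\<in>A (ds @ [d]). \<forall>ob\<in>P - {ob}. sd ob \<in> cov (ds @ [d]) a \<or> td ob \<in> cov (ds @ [d]) a"
    proof (intro ballI)
      fix a' ob2 assume a': "a' \<in> A (ds @ [d])" and ob2: "ob2 \<in> P - {ob}"
      obtain a b where ab: "a' = a @ [b]" "a \<in> A ds" "length a = length ds"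
        "cov (ds @ [d]) a' = cov ds a \<union> (if b then {x} else {})" using step[OF a'] by blast
      have "sd ob2 \<in> cov ds a \<or> td ob2 \<in> cov ds a" using D(5) ab(2) ob2 by blast
      then show "sd ob2 \<in> cov (ds @ [d]) a' \<or> td ob2 \<in> cov (ds @ [d]) a'" using ab(4) by blast
    qed
    show "\<forall>ob\<in>P - {ob}. lv ob \<le> card {a \<in> A (ds @ [d]). sd ob \<in> cov (ds @ [d]) a \<and> td ob \<in> cov (ds @ [d]) a}"
    proof
      fix ob2 assume ob2: "ob2 \<in> P - {ob}"
      have "card {a\<in>A ds. sd ob2 \<in> cov ds a \<and> td ob2 \<in> cov ds a}
              \<le> card {a \<in> A (ds @ [d]). sd ob2 \<in> cov (ds @ [d]) a \<and> td ob2 \<in> cov (ds @ [d]) a}"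
        by (rule card_lift_mono) (rule cov_mono_step)
      then show "lv ob2 \<le> card {a \<in> A (ds @ [d]). sd ob2 \<in> cov (ds @ [d]) a \<and> td ob2 \<in> cov (ds @ [d]) a}"
        using D(6) ob2 by (meson DiffD1 le_trans)
    qed
    show "\<forall>a\<in>A (ds @ [d]). pot (ds @ [d]) (P - {ob}) a \<le> (1 + cc 0) * real S + real X'"
    proof
      fix a' assume a': "a' \<in> A (ds @ [d])"
      obtain a b where ab: "a' = a @ [b]" "a \<in> A ds" "length a = length ds"
        "cov (ds @ [d]) a' = cov ds a \<union> (if b then {x} else {})" using step[OF a'] by blast
      have c1: "real (card (cov (ds @ [d]) a')) \<le> real (card (cov ds a)) + (real X' - real X)"
      proof (cases "x \<in> cov ds a \<or> \<not> b")
        case True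
        then have "cov (ds @ [d]) a' = cov ds a" using ab(4) by auto
        then show ?thesis using hX by auto
      next
        case False
        then have "X' = X + 1" using hX ab(2) by blast
        moreover have "card (cov (ds @ [d]) a') = Suc (card (cov ds a))"
          using False ab(4) cf[of a] by simp
        ultimately show ?thesis by simp
      qed
      have s1: "(\<Sum>ob\<in>P - {ob}. tm (cov (ds @ [d]) a') ob) = (\<Sum>ob\<in>P - {ob}. tm (cov ds a) ob)"
      proof (cases b)
        case True
        then have "cov (ds @ [d]) a' = cov ds a \<union> {x}" using ab(4) by simp
        then show ?thesis using sum_tm_cong[OF oth] by simp
      next
        case False
        then show ?thesis using ab(4) by simp
      qed
      have s2: "(\<Sum>ob\<in>P. tm (cov ds a) ob) = tm (cov ds a) ob + (\<Sum>ob\<in>P - {ob}. tm (cov ds a) ob)"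
        using D(2) ob by (simp add: sum.remove)
      have "pot (ds @ [d]) (P - {ob}) a' \<le> pot ds P a + (real X' - real X)"
        unfolding pot_def using c1 s1 s2 tm_nonneg[of "cov ds a" ob] by simp
      moreover have "pot ds P a \<le> (1 + cc 0) * S + X" using D(7) ab(2) by blast
      ultimately show "pot (ds @ [d]) (P - {ob}) a' \<le> (1 + cc 0) * real S + real X'"
        by simp
    qed
    show "\<forall>f. \<exists>\<sigma>. length \<sigma> = length (ds @ [d]) \<and> (\<forall>c<2 * S. c \<notin> side f ` (P - {ob}) \<longrightarrow> c \<in> cov (ds @ [d]) \<sigma>)"
    proof
      fix f
      define f' where "f' = f(ob := (x = sd ob))"
      obtain \<sigma> where \<sigma>: "length \<sigma> = length ds" "\<forall>c<2*S. c \<notin> side f' ` P \<longrightarrow> c \<in> cov ds \<sigma>"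
        using D(8) by blast
      define \<sigma>' where "\<sigma>' = \<sigma> @ [True]"
      have cv: "cov (ds @ [d]) \<sigma>' = cov ds \<sigma> \<union> {x}"
        unfolding \<sigma>'_def cov_snoc[OF \<sigma>(1)] by (simp add: d_def)
      have sob: "side f' ob = x" using x by (auto simp: side_def f'_def)
      have seq: "side f' ob2 = side f ob2" if "ob2 \<in> P - {ob}" for ob2
        using that by (simp add: side_def f'_def)
      have "\<forall>c<2 * S. c \<notin> side f ` (P - {ob}) \<longrightarrow> c \<in> cov (ds @ [d]) \<sigma>'"
      proof (intro allI impI)
        fix c assume c: "c < 2 * S" "c \<notin> side f ` (P - {ob})"
        show "c \<in> cov (ds @ [d]) \<sigma>'"
        proof (cases "c = x")
          case True then show ?thesis using cv by simp
        next
          case False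
          have "c \<notin> side f' ` P"
          proof
            assume "c \<in> side f' ` P"
            then obtain ob2 where "ob2 \<in> P" "c = side f' ob2" by blast
            then show False using False sob seq c(2) by (cases "ob2 = ob") auto
          qed
          then show ?thesis using \<sigma>(2) c(1) cv by blast
        qed
      qed
      then show "\<exists>\<sigma>. length \<sigma> = length (ds @ [d]) \<and> (\<forall>c<2 * S. c \<notin> side f ` (P - {ob}) \<longrightarrow> c \<in> cov (ds @ [d]) \<sigma>)"
        using \<sigma>(1) by (intro exI[of _ \<sigma>']) (simp add: \<sigma>'_def)
    qed
  qed
qed


lemma A_step2: "a'' \<in> A (ds @ [d1, d2]) \<Longrightarrow> \<exists>a b1 b2. a'' = a @ [b1, b2] \<and> a \<in> A ds"
proof -
  assume h: "a'' \<in> A (ds @ [d1, d2])"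
  have "a'' \<in> A ((ds @ [d1]) @ [d2])" using h by simp
  then obtain a' b2 where 1: "a'' = a' @ [b2]" "a' \<in> A (ds @ [d1])" using A_step by blast
  then obtain a b1 where 2: "a' = a @ [b1]" "a \<in> A ds" using A_step by blast
  show ?thesis using 1 2 by auto
qed

lemma A_child2: "a \<in> A ds \<Longrightarrow> \<exists>b1 b2. a @ [b1, b2] \<in> A (ds @ [d1, d2])"
proof -
  assume "a \<in> A ds"
  then obtain b1 where "a @ [b1] \<in> A (ds @ [d1])" using A_child by blast
  then obtain b2 where "(a @ [b1]) @ [b2] \<in> A ((ds @ [d1]) @ [d2])" using A_child by blast
  then show ?thesis by auto
qed

lemma cov_snoc2:
  assumes "length a = length ds"
  shows "cov (ds @ [d1, d2]) (a @ [b1, b2]) =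
     cov ds a \<union> (if b1 then fst d1 else snd d1) \<union> (if b2 then fst d2 else snd d2)"
proof -
  have l: "length (a @ [b1]) = length (ds @ [d1])" using assms by simp
  have "cov (ds @ [d1, d2]) (a @ [b1, b2]) = cov ((ds @ [d1]) @ [d2]) ((a @ [b1]) @ [b2])" by simp
  also have "\<dots> = cov (ds @ [d1]) (a @ [b1]) \<union> (if b2 then fst d2 else snd d2)"
    by (rule cov_snoc[OF l])
  also have "\<dots> = cov ds a \<union> (if b1 then fst d1 else snd d1) \<union> (if b2 then fst d2 else snd d2)"
    using cov_snoc[OF assms] by simp
  finally show ?thesis .
qed

lemma card_lift2:
  assumes Q: "Q \<subseteq> A ds" and Q': "Q' \<subseteq> A (ds @ [d1, d2])"
    and h: "\<And>a b1 b2. a \<in> Q \<Longrightarrow> a @ [b1, b2] \<in> A (ds @ [d1, d2]) \<Longrightarrow> a @ [b1, b2] \<in> Q'"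
  shows "card Q \<le> card Q'"
proof -
  have "Q \<subseteq> take (length ds) ` Q'"
  proof
    fix a assume aQ: "a \<in> Q"
    then obtain b1 b2 where c: "a @ [b1, b2] \<in> A (ds @ [d1, d2])" using A_child2 Q by blast
    then have "a @ [b1, b2] \<in> Q'" using h aQ by blast
    moreover have "take (length ds) (a @ [b1, b2]) = a" using A_len aQ Q by auto
    ultimately show "a \<in> take (length ds) ` Q'" by (metis image_eqI)
  qed
  moreover have "finite Q'" using Q' A_fin finite_subset by blast
  ultimately show ?thesis by (meson card_image_le card_mono finite_imageI le_trans)
qed

definition key :: "item list \<Rightarrow> obj \<Rightarrow> nat \<times> bool list set \<times> bool list set" where
  "key ds ob = (lv ob, {a\<in>A ds. sd ob \<in> cov ds a}, {a\<in>A ds. td ob \<in> cov ds a})"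

definition unan :: "item list \<Rightarrow> obj \<Rightarrow> bool" where
  "unan ds ob \<longleftrightarrow> (\<forall>a\<in>A ds. sd ob \<in> cov ds a) \<or> (\<forall>a\<in>A ds. td ob \<in> cov ds a)"

lemma keyD:
  assumes "key ds ob2 = key ds ob" "a \<in> A ds"
  shows "lv ob2 = lv ob" "sd ob2 \<in> cov ds a \<longleftrightarrow> sd ob \<in> cov ds a"
    "td ob2 \<in> cov ds a \<longleftrightarrow> td ob \<in> cov ds a"
proof -
  have e: "lv ob2 = lv ob" "{a\<in>A ds. sd ob2 \<in> cov ds a} = {a\<in>A ds. sd ob \<in> cov ds a}"
    "{a\<in>A ds. td ob2 \<in> cov ds a} = {a\<in>A ds. td ob \<in> cov ds a}"
    using assms(1) unfolding key_def by simp_all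
  show "lv ob2 = lv ob" by (rule e(1))
  have "a \<in> {a\<in>A ds. sd ob2 \<in> cov ds a} \<longleftrightarrow> a \<in> {a\<in>A ds. sd ob \<in> cov ds a}" using e(2) by simp
  then show "sd ob2 \<in> cov ds a \<longleftrightarrow> sd ob \<in> cov ds a" using assms(2) by simp
  have "a \<in> {a\<in>A ds. td ob2 \<in> cov ds a} \<longleftrightarrow> a \<in> {a\<in>A ds. td ob \<in> cov ds a}" using e(3) by simp
  then show "td ob2 \<in> cov ds a \<longleftrightarrow> td ob \<in> cov ds a" using assms(2) by simp
qed


lemma T_join:
  assumes I: "Inv ds P S X"
    and o: "o1 \<in> P" "o2 \<in> P" "o3 \<in> P" "o4 \<in> P"
    and dst: "o1 \<noteq> o2" "o1 \<noteq> o3" "o1 \<noteq> o4" "o2 \<noteq> o3" "o2 \<noteq> o4" "o3 \<noteq> o4"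
    and k2: "key ds o2 = key ds o1" and k3: "key ds o3 = key ds o1" and k4: "key ds o4 = key ds o1"
    and nu: "\<not> unan ds o1"
  shows "Inv (ds @ [({sd o1},{sd o2}), ({td o3},{td o4})])
     (P - {o1,o2,o3,o4} \<union> {(Suc (lv o1), sd o1, sd o2), (Suc (lv o1), td o3, td o4)}) S X"
proof -
  define d1 where "d1 = ({sd o1},{sd o2})"
  define d2 where "d2 = ({td o3},{td o4})"
  define n1 where "n1 = (Suc (lv o1), sd o1, sd o2)"
  define n2 where "n2 = (Suc (lv o1), td o3, td o4)"
  define Os where "Os = {o1,o2,o3,o4}"
  define P0 where "P0 = P - Os"
  define l where "l = lv o1"
  note D = InvD[OF I]
  have cs: "cov ds a \<subseteq> {..<2*S}" for a using Inv_cov_sub[OF I] .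
  have cf: "finite (cov ds a)" for a using Inv_cov_fin[OF I] .
  have lt1: "sd o1 < 2*S" "td o1 < 2*S" "sd o1 \<noteq> td o1" using D(3) o(1) by blast+
  have lt2: "sd o2 < 2*S" "td o2 < 2*S" "sd o2 \<noteq> td o2" using D(3) o(2) by blast+
  have lt3: "sd o3 < 2*S" "td o3 < 2*S" "sd o3 \<noteq> td o3" using D(3) o(3) by blast+
  have lt4: "sd o4 < 2*S" "td o4 < 2*S" "sd o4 \<noteq> td o4" using D(3) o(4) by blast+
  have dj: "{sd o1, td o1} \<inter> {sd o2, td o2} = {}" "{sd o1, td o1} \<inter> {sd o3, td o3} = {}"
    "{sd o1, td o1} \<inter> {sd o4, td o4} = {}" "{sd o2, td o2} \<inter> {sd o3, td o3} = {}"
    "{sd o2, td o2} \<inter> {sd o4, td o4} = {}" "{sd o3, td o3} \<inter> {sd o4, td o4} = {}"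
    using D(4) o dst by blast+
  have oth: "{sd ob, td ob} \<inter> {sd o1, td o1, sd o2, td o2, sd o3, td o3, sd o4, td o4} = {}"
    if "ob \<in> P0" for ob
  proof -
    have "ob \<in> P" "ob \<noteq> o1" "ob \<noteq> o2" "ob \<noteq> o3" "ob \<noteq> o4" using that by (auto simp: P0_def Os_def)
    then have "{sd ob, td ob} \<inter> {sd o1, td o1} = {}" "{sd ob, td ob} \<inter> {sd o2, td o2} = {}"
      "{sd ob, td ob} \<inter> {sd o3, td o3} = {}" "{sd ob, td ob} \<inter> {sd o4, td o4} = {}"
      using D(4) o by blast+
    then show ?thesis by blast
  qed
  have lvs: "lv o2 = l" "lv o3 = l" "lv o4 = l"
    using keyD(1)[OF k2] keyD(1)[OF k3] keyD(1)[OF k4] A_ne unfolding l_def by blast+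
  have ks: "(sd o2 \<in> cov ds a \<longleftrightarrow> sd o1 \<in> cov ds a) \<and> (sd o3 \<in> cov ds a \<longleftrightarrow> sd o1 \<in> cov ds a) \<and>
       (sd o4 \<in> cov ds a \<longleftrightarrow> sd o1 \<in> cov ds a) \<and> (td o2 \<in> cov ds a \<longleftrightarrow> td o1 \<in> cov ds a) \<and>
       (td o3 \<in> cov ds a \<longleftrightarrow> td o1 \<in> cov ds a) \<and> (td o4 \<in> cov ds a \<longleftrightarrow> td o1 \<in> cov ds a)"
    if "a \<in> A ds" for a
    using keyD(2,3)[OF k2 that] keyD(2,3)[OF k3 that] keyD(2,3)[OF k4 that] by blast
  obtain a1 where a1: "a1 \<in> A ds" "sd o1 \<notin> cov ds a1" using nu unfolding unan_def by blast
  obtain a2 where a2: "a2 \<in> A ds" "td o1 \<notin> cov ds a2" using nu unfolding unan_def by blast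
  have a1t: "td o1 \<in> cov ds a1" using D(5) a1 o(1) by blast
  have a2s: "sd o1 \<in> cov ds a2" using D(5) a2 o(1) by blast
  define B where "B = {a\<in>A ds. sd o1 \<in> cov ds a \<and> td o1 \<in> cov ds a}"
  have cB: "l \<le> card B" using D(6) o(1) unfolding B_def l_def by blast
  have fB: "finite B" unfolding B_def using A_fin by simp
  have lk: "l < k"
  proof -
    have "a1 \<notin> B" "a2 \<notin> B" "a1 \<noteq> a2" using a1 a2 a2s unfolding B_def by auto
    then have "card (insert a1 (insert a2 B)) = card B + 2" using fB by simp
    moreover have "insert a1 (insert a2 B) \<subseteq> A ds" using a1 a2 unfolding B_def by auto
    ultimately have "card B + 2 \<le> card (A ds)" using A_fin by (metis card_mono)
    then show ?thesis using A_card[of ds] cB by linarith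
  qed
  have n1P: "n1 \<notin> P"
  proof
    assume "n1 \<in> P"
    moreover have "n1 \<noteq> o1" by (simp add: n1_def prod_eq_iff lv_def)
    ultimately have "{sd n1, td n1} \<inter> {sd o1, td o1} = {}" using D(4) o(1) by blast
    then show False by (simp add: n1_def)
  qed
  have n2P: "n2 \<notin> P"
  proof
    assume "n2 \<in> P"
    moreover have "n2 \<noteq> o3" using lvs by (auto simp: n2_def prod_eq_iff lv_def l_def)
    ultimately have "{sd n2, td n2} \<inter> {sd o3, td o3} = {}" using D(4) o(3) by blast
    then show False by (simp add: n2_def)
  qed
  have n12: "n1 \<noteq> n2" using dj(2) by (auto simp: n1_def n2_def)
  have PP: "P - {o1,o2,o3,o4} \<union> {n1, n2} = insert n1 (insert n2 P0)"
    unfolding P0_def Os_def by auto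
  have fP0: "finite P0" using D(2) by (simp add: P0_def)
  have step: "\<exists>a b1 b2. a'' = a @ [b1, b2] \<and> a \<in> A ds \<and> length a = length ds \<and>
      cov (ds @ [d1, d2]) a'' = cov ds a \<union> {if b1 then sd o1 else sd o2} \<union> {if b2 then td o3 else td o4}"
    if a''A: "a'' \<in> A (ds @ [d1, d2])" for a''
  proof -
    obtain a b1 b2 where ab: "a'' = a @ [b1, b2]" "a \<in> A ds" using A_step2[OF a''A] by blast
    have len: "length a = length ds" using A_len ab(2) .
    show ?thesis using ab len cov_snoc2[OF len, of d1 d2 b1 b2] by (auto simp: d1_def d2_def)
  qed
  show ?thesis
    unfolding d1_def[symmetric] d2_def[symmetric] n1_def[symmetric] n2_def[symmetric] PP
  proof (rule InvI)
    show "\<forall>e\<in>set (ds @ [d1, d2]). fst e \<subseteq> {..<2 * S} \<and> snd e \<subseteq> {..<2 * S} \<and> fst e \<inter> snd e = {}"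
      using D(1) lt1 lt2 lt3 lt4 dj(1) dj(6) by (auto simp: d1_def d2_def)
    show "finite (insert n1 (insert n2 P0))" using fP0 by simp
    show "\<forall>ob\<in>insert n1 (insert n2 P0). sd ob < 2 * S \<and> td ob < 2 * S \<and> sd ob \<noteq> td ob"
      using D(3) lt1 lt2 lt3 lt4 dj(1) dj(6) by (auto simp: n1_def n2_def P0_def)
    show "\<forall>oa\<in>insert n1 (insert n2 P0). \<forall>ob2\<in>insert n1 (insert n2 P0).
            oa \<noteq> ob2 \<longrightarrow> {sd oa, td oa} \<inter> {sd ob2, td ob2} = {}"
    proof (intro ballI impI)
      fix oa ob2 assume oa: "oa \<in> insert n1 (insert n2 P0)" and ob2: "ob2 \<in> insert n1 (insert n2 P0)"
        and ne: "oa \<noteq> ob2"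
      have n1n2: "{sd n1, td n1} \<inter> {sd n2, td n2} = {}"
        using dj(2) dj(3) dj(4) dj(5) by (auto simp: n1_def n2_def)
      have n1o: "{sd n1, td n1} \<inter> {sd ob, td ob} = {}" if "ob \<in> P0" for ob
        using oth[OF that] by (auto simp: n1_def)
      have n2o: "{sd n2, td n2} \<inter> {sd ob, td ob} = {}" if "ob \<in> P0" for ob
        using oth[OF that] by (auto simp: n2_def)
      have PP0: "\<forall>oa\<in>P0. \<forall>ob2\<in>P0. oa \<noteq> ob2 \<longrightarrow> {sd oa, td oa} \<inter> {sd ob2, td ob2} = {}"
        using D(4) unfolding P0_def by blast
      have sym: "\<And>w x y z. {w, x} \<inter> {y, z} = ({}::nat set) \<Longrightarrow> {y, z} \<inter> {w, x} = {}" by blast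
      consider "oa = n1" | "oa = n2" | "oa \<in> P0" using oa by blast
      then show "{sd oa, td oa} \<inter> {sd ob2, td ob2} = {}"
      proof cases
        case 1
        consider "ob2 = n2" | "ob2 \<in> P0" using ob2 ne 1 by blast
        then show ?thesis
        proof cases
          case 1 then show ?thesis using \<open>oa = n1\<close> n1n2 by simp
        next
          case 2 then show ?thesis using \<open>oa = n1\<close> n1o by simp
        qed
      next
        case 2
        consider "ob2 = n1" | "ob2 \<in> P0" using ob2 ne 2 by blast
        then show ?thesis
        proof cases
          case 1 then show ?thesis using \<open>oa = n2\<close> n1n2 sym by metis
        next
          case 2 then show ?thesis using \<open>oa = n2\<close> n2o by simp
        qed
      next
        case 3
        consider "ob2 = n1" | "ob2 = n2" | "ob2 \<in> P0" using ob2 by blast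
        then show ?thesis
        proof cases
          case 1 then show ?thesis using 3 n1o sym by metis
        next
          case 2 then show ?thesis using 3 n2o sym by metis
        next
          case 4: 3 then show ?thesis using 3 PP0 ne by blast
        qed
      qed
    qed
    show "\<forall>a\<in>A (ds @ [d1, d2]). \<forall>ob\<in>insert n1 (insert n2 P0). sd ob \<in> cov (ds @ [d1, d2]) a \<or> td ob \<in> cov (ds @ [d1, d2]) a"
    proof (intro ballI)
      fix a'' ob assume a'': "a'' \<in> A (ds @ [d1, d2])" and ob: "ob \<in> insert n1 (insert n2 P0)"
      obtain a b1 b2 where ab: "a'' = a @ [b1, b2]" "a \<in> A ds" "length a = length ds"
        "cov (ds @ [d1, d2]) a'' = cov ds a \<union> {if b1 then sd o1 else sd o2} \<union> {if b2 then td o3 else td o4}"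
        using step[OF a''] by blast
      show "sd ob \<in> cov (ds @ [d1, d2]) a'' \<or> td ob \<in> cov (ds @ [d1, d2]) a''"
      proof (cases "ob = n1 \<or> ob = n2")
        case True then show ?thesis using ab(4) by (auto simp: n1_def n2_def)
      next
        case False then have "ob \<in> P" using ob by (simp add: P0_def)
        then show ?thesis using D(5) ab by blast
      qed
    qed
    show "\<forall>ob\<in>insert n1 (insert n2 P0). lv ob \<le> card {a \<in> A (ds @ [d1, d2]). sd ob \<in> cov (ds @ [d1, d2]) a \<and> td ob \<in> cov (ds @ [d1, d2]) a}"
    proof
      fix ob assume ob: "ob \<in> insert n1 (insert n2 P0)"
      have mono: "cov ds a \<subseteq> cov (ds @ [d1, d2]) (a @ [b1, b2])" if "a \<in> A ds" for a b1 b2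
        unfolding cov_snoc2[OF A_len[OF that], of d1 d2 b1 b2] by blast
      consider "ob = n1" | "ob = n2" | "ob \<in> P0" using ob by blast
      then show "lv ob \<le> card {a \<in> A (ds @ [d1, d2]). sd ob \<in> cov (ds @ [d1, d2]) a \<and> td ob \<in> cov (ds @ [d1, d2]) a}"
      proof cases
        case 1
        define Q where "Q = {a \<in> A ds. sd o1 \<in> cov ds a}"
        have sub: "insert a2 B \<subseteq> Q" using a2 a2s unfolding Q_def B_def by auto
        have nb: "a2 \<notin> B" using a2 unfolding B_def by auto
        have fQ: "finite Q" unfolding Q_def using A_fin by simp
        have "card (insert a2 B) = Suc (card B)" using fB nb by simp
        moreover have "card (insert a2 B) \<le> card Q" using card_mono[OF fQ sub] .
        ultimately have "Suc l \<le> card Q" using cB by linarith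
        moreover have "card Q \<le> card {a \<in> A (ds @ [d1, d2]). sd ob \<in> cov (ds @ [d1, d2]) a \<and> td ob \<in> cov (ds @ [d1, d2]) a}"
        proof (rule card_lift2)
          fix a b1 b2 assume aQ: "a \<in> Q" and c: "a @ [b1, b2] \<in> A (ds @ [d1, d2])"
          have "a \<in> A ds" "sd o1 \<in> cov ds a" using aQ unfolding Q_def by auto
          then have "sd o1 \<in> cov ds a" "sd o2 \<in> cov ds a" using ks by auto
          then show "a @ [b1, b2] \<in> {a \<in> A (ds @ [d1, d2]). sd ob \<in> cov (ds @ [d1, d2]) a \<and> td ob \<in> cov (ds @ [d1, d2]) a}"
            using c mono[OF \<open>a \<in> A ds\<close>, of b1 b2] 1 by (auto simp: n1_def)
        qed (auto simp: Q_def)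
        ultimately show ?thesis using 1 by (simp add: n1_def l_def)
      next
        case 2
        define Q where "Q = {a \<in> A ds. td o1 \<in> cov ds a}"
        have sub: "insert a1 B \<subseteq> Q" using a1 a1t unfolding Q_def B_def by auto
        have nb: "a1 \<notin> B" using a1 unfolding B_def by auto
        have fQ: "finite Q" unfolding Q_def using A_fin by simp
        have "card (insert a1 B) = Suc (card B)" using fB nb by simp
        moreover have "card (insert a1 B) \<le> card Q" using card_mono[OF fQ sub] .
        ultimately have "Suc l \<le> card Q" using cB by linarith
        moreover have "card Q \<le> card {a \<in> A (ds @ [d1, d2]). sd ob \<in> cov (ds @ [d1, d2]) a \<and> td ob \<in> cov (ds @ [d1, d2]) a}"
        proof (rule card_lift2)
          fix a b1 b2 assume aQ: "a \<in> Q" and c: "a @ [b1, b2] \<in> A (ds @ [d1, d2])"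
          have "a \<in> A ds" "td o1 \<in> cov ds a" using aQ unfolding Q_def by auto
          then have "td o3 \<in> cov ds a" "td o4 \<in> cov ds a" using ks by auto
          then show "a @ [b1, b2] \<in> {a \<in> A (ds @ [d1, d2]). sd ob \<in> cov (ds @ [d1, d2]) a \<and> td ob \<in> cov (ds @ [d1, d2]) a}"
            using c mono[OF \<open>a \<in> A ds\<close>, of b1 b2] 2 by (auto simp: n2_def)
        qed (auto simp: Q_def)
        ultimately show ?thesis using 2 by (simp add: n2_def l_def)
      next
        case 3
        then have obP: "ob \<in> P" by (simp add: P0_def)
        have "card {a\<in>A ds. sd ob \<in> cov ds a \<and> td ob \<in> cov ds a} \<le>
              card {a \<in> A (ds @ [d1, d2]). sd ob \<in> cov (ds @ [d1, d2]) a \<and> td ob \<in> cov (ds @ [d1, d2]) a}"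
        proof (rule card_lift2)
          fix a b1 b2 assume aQ: "a \<in> {a\<in>A ds. sd ob \<in> cov ds a \<and> td ob \<in> cov ds a}"
            and c: "a @ [b1, b2] \<in> A (ds @ [d1, d2])"
          then show "a @ [b1, b2] \<in> {a \<in> A (ds @ [d1, d2]). sd ob \<in> cov (ds @ [d1, d2]) a \<and> td ob \<in> cov (ds @ [d1, d2]) a}"
            using mono[of a b1 b2] by auto
        qed auto
        then show ?thesis using D(6) obP by (meson le_trans)
      qed
    qed
    show "\<forall>a\<in>A (ds @ [d1, d2]). pot (ds @ [d1, d2]) (insert n1 (insert n2 P0)) a \<le> (1 + cc 0) * real S + real X"
    proof
      fix a'' assume a'': "a'' \<in> A (ds @ [d1, d2])"
      obtain a b1 b2 where ab: "a'' = a @ [b1, b2]" "a \<in> A ds" "length a = length ds"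
        "cov (ds @ [d1, d2]) a'' = cov ds a \<union> {if b1 then sd o1 else sd o2} \<union> {if b2 then td o3 else td o4}"
        using step[OF a''] by blast
      define Cv where "Cv = cov ds a"
      define C2 where "C2 = cov (ds @ [d1, d2]) a''"
      define x1 where "x1 = (if b1 then sd o1 else sd o2)"
      define x2 where "x2 = (if b2 then td o3 else td o4)"
      have C2e: "C2 = insert x1 (insert x2 Cv)" using ab(4) unfolding C2_def Cv_def x1_def x2_def by auto
      have ksa: "(sd o2 \<in> Cv \<longleftrightarrow> sd o1 \<in> Cv) \<and> (sd o3 \<in> Cv \<longleftrightarrow> sd o1 \<in> Cv) \<and>
       (sd o4 \<in> Cv \<longleftrightarrow> sd o1 \<in> Cv) \<and> (td o2 \<in> Cv \<longleftrightarrow> td o1 \<in> Cv) \<and>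
       (td o3 \<in> Cv \<longleftrightarrow> td o1 \<in> Cv) \<and> (td o4 \<in> Cv \<longleftrightarrow> td o1 \<in> Cv)"
        using ks[OF ab(2)] unfolding Cv_def .
      have cov1: "sd o1 \<in> Cv \<or> td o1 \<in> Cv" using D(5) ab(2) o(1) unfolding Cv_def by blast
      have tmo: "tm Cv o2 = tm Cv o1" "tm Cv o3 = tm Cv o1" "tm Cv o4 = tm Cv o1"
        using ksa lvs unfolding tm_def rel_def l_def by auto
      have key: "real (card C2) + tm C2 n1 + tm C2 n2 \<le> real (card Cv) + 4 * tm Cv o1"
      proof -
        have fCv: "finite Cv" unfolding Cv_def by (rule cf)
        have cr: "4 * cc l = 1 + cc (Suc l)" using cc_rec[OF lk] .
        consider "sd o1 \<in> Cv" "td o1 \<notin> Cv" | "sd o1 \<notin> Cv" "td o1 \<in> Cv" | "sd o1 \<in> Cv" "td o1 \<in> Cv"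
          using cov1 by blast
        then show ?thesis
        proof cases
          case 1
          have in1: "x1 \<in> Cv" using 1 ksa by (auto simp: x1_def)
          have no2: "x2 \<notin> Cv" using 1 ksa by (auto simp: x2_def)
          have C2': "C2 = insert x2 Cv" using C2e in1 by auto
          have "card C2 = Suc (card Cv)" using C2' no2 fCv by simp
          moreover have "\<not> rel C2 n1" using 1 ksa C2' by (auto simp: rel_def n1_def)
          moreover have "rel C2 n2"
          proof -
            have "td o3 \<notin> Cv" "td o4 \<notin> Cv" using 1 ksa by auto
            moreover have "td o3 \<noteq> td o4" using dj(6) by auto
            ultimately show ?thesis using C2' by (auto simp: rel_def n2_def x2_def)
          qed
          moreover have "rel Cv o1" using 1 by (simp add: rel_def)
          ultimately show ?thesis using cr by (simp add: tm_def n2_def l_def)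
        next
          case 2
          have in2: "x2 \<in> Cv" using 2 ksa by (auto simp: x2_def)
          have no1: "x1 \<notin> Cv" using 2 ksa by (auto simp: x1_def)
          have C2': "C2 = insert x1 Cv" using C2e in2 by auto
          have "card C2 = Suc (card Cv)" using C2' no1 fCv by simp
          moreover have "\<not> rel C2 n2" using 2 ksa C2' by (auto simp: rel_def n2_def)
          moreover have "rel C2 n1"
          proof -
            have "sd o1 \<notin> Cv" "sd o2 \<notin> Cv" using 2 ksa by auto
            moreover have "sd o1 \<noteq> sd o2" using dj(1) by auto
            ultimately show ?thesis using C2' by (auto simp: rel_def n1_def x1_def)
          qed
          moreover have "rel Cv o1" using 2 by (simp add: rel_def)
          ultimately show ?thesis using cr by (simp add: tm_def n1_def l_def)
        next
          case 3
          have "x1 \<in> Cv" "x2 \<in> Cv" using 3 ksa by (auto simp: x1_def x2_def)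
          then have C2': "C2 = Cv" using C2e by auto
          have "\<not> rel C2 n1" "\<not> rel C2 n2" using 3 ksa C2' by (auto simp: rel_def n1_def n2_def)
          then show ?thesis using C2' tm_nonneg[of Cv o1] by (simp add: tm_def)
        qed
      qed
      have s0: "(\<Sum>ob\<in>P0. tm C2 ob) = (\<Sum>ob\<in>P0. tm Cv ob)"
      proof -
        have "\<forall>ob\<in>P0. sd ob \<notin> {x1, x2} \<and> td ob \<notin> {x1, x2}"
        proof
          fix ob assume "ob \<in> P0"
          from oth[OF this] show "sd ob \<notin> {x1, x2} \<and> td ob \<notin> {x1, x2}"
            unfolding x1_def x2_def by auto
        qed
        from sum_tm_cong[OF this, of Cv] show ?thesis using C2e by (simp add: insert_commute)
      qed
      have sP: "(\<Sum>ob\<in>P. tm Cv ob) = (\<Sum>ob\<in>P0. tm Cv ob) + 4 * tm Cv o1"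
      proof -
        have "Os \<subseteq> P" using o by (simp add: Os_def)
        then have "(\<Sum>ob\<in>P. tm Cv ob) = (\<Sum>ob\<in>P0. tm Cv ob) + (\<Sum>ob\<in>Os. tm Cv ob)"
          using D(2) unfolding P0_def by (simp add: sum.subset_diff)
        moreover have "(\<Sum>ob\<in>Os. tm Cv ob) = tm Cv o1 + tm Cv o2 + tm Cv o3 + tm Cv o4"
          unfolding Os_def using dst by simp
        ultimately show ?thesis using tmo by simp
      qed
      have sN: "(\<Sum>ob\<in>insert n1 (insert n2 P0). tm C2 ob) = tm C2 n1 + tm C2 n2 + (\<Sum>ob\<in>P0. tm C2 ob)"
      proof -
        have "n1 \<notin> insert n2 P0" "n2 \<notin> P0" using n12 n1P n2P by (auto simp: P0_def)
        then show ?thesis using fP0 by simp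
      qed
      have "pot (ds @ [d1, d2]) (insert n1 (insert n2 P0)) a'' \<le> pot ds P a"
        unfolding pot_def C2_def[symmetric] Cv_def[symmetric] using key s0 sP sN by simp
      moreover have "pot ds P a \<le> (1 + cc 0) * S + X" using D(7) ab(2) by blast
      ultimately show "pot (ds @ [d1, d2]) (insert n1 (insert n2 P0)) a'' \<le> (1 + cc 0) * real S + real X"
        by simp
    qed
    show "\<forall>f. \<exists>\<sigma>. length \<sigma> = length (ds @ [d1, d2]) \<and>
       (\<forall>c<2 * S. c \<notin> side f ` insert n1 (insert n2 P0) \<longrightarrow> c \<in> cov (ds @ [d1, d2]) \<sigma>)"
    proof
      fix f
      define f' where "f' = f(o1 := True, o2 := True, o3 := False, o4 := False)"
      obtain \<sigma> where \<sigma>: "length \<sigma> = length ds" "\<forall>c<2*S. c \<notin> side f' ` P \<longrightarrow> c \<in> cov ds \<sigma>"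
        using D(8) by blast
      define \<sigma>' where "\<sigma>' = \<sigma> @ [\<not> f n1, \<not> f n2]"
      have cv: "cov (ds @ [d1, d2]) \<sigma>' = cov ds \<sigma> \<union> {if \<not> f n1 then sd o1 else sd o2}
           \<union> {if \<not> f n2 then td o3 else td o4}"
        unfolding \<sigma>'_def cov_snoc2[OF \<sigma>(1)] by (simp add: d1_def d2_def)
      have so: "side f' o1 = sd o1" "side f' o2 = sd o2" "side f' o3 = td o3" "side f' o4 = td o4"
        using dst by (auto simp: side_def f'_def)
      have seq: "side f' ob = side f ob" if "ob \<in> P0" for ob
        using that by (auto simp: side_def f'_def P0_def Os_def)
      have "\<forall>c<2 * S. c \<notin> side f ` insert n1 (insert n2 P0) \<longrightarrow> c \<in> cov (ds @ [d1, d2]) \<sigma>'"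
      proof (intro allI impI)
        fix c assume c: "c < 2 * S" "c \<notin> side f ` insert n1 (insert n2 P0)"
        have cn1: "c \<noteq> side f n1" and cn2: "c \<noteq> side f n2" using c(2) by auto
        show "c \<in> cov (ds @ [d1, d2]) \<sigma>'"
        proof (cases "c \<in> {sd o1, sd o2, td o3, td o4}")
          case True
          then show ?thesis using cn1 cn2 unfolding cv by (auto simp: side_def n1_def n2_def split: if_splits)
        next
          case False
          have "c \<notin> side f' ` P"
          proof
            assume "c \<in> side f' ` P"
            then obtain ob where ob: "ob \<in> P" "c = side f' ob" by blast
            show False
            proof (cases "ob \<in> Os")
              case True
              then show False using ob(2) so False by (auto simp: Os_def)
            next
              case False
              then have "ob \<in> P0" using ob(1) by (simp add: P0_def)
              then show False using seq ob(2) c(2) by auto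
            qed
          qed
          then show ?thesis using \<sigma>(2) c(1) cv by blast
        qed
      qed
      then show "\<exists>\<sigma>. length \<sigma> = length (ds @ [d1, d2]) \<and>
       (\<forall>c<2 * S. c \<notin> side f ` insert n1 (insert n2 P0) \<longrightarrow> c \<in> cov (ds @ [d1, d2]) \<sigma>)"
        using \<sigma>(1) by (intro exI[of _ \<sigma>']) (simp add: \<sigma>'_def)
    qed
  qed
qed


lemma four_elems:
  assumes "finite M" "4 \<le> card M"
  shows "\<exists>a b c d. a\<in>M \<and> b\<in>M \<and> c\<in>M \<and> d\<in>M \<and> a\<noteq>b \<and> a\<noteq>c \<and> a\<noteq>d \<and> b\<noteq>c \<and> b\<noteq>d \<and> c\<noteq>d"
proof -
  have "M \<noteq> {}" using assms by auto
  then obtain a where a: "a \<in> M" by blast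
  define M1 where "M1 = M - {a}"
  have c1: "3 \<le> card M1" using assms a by (simp add: card_Diff_singleton M1_def)
  then have "M1 \<noteq> {}" by auto
  then obtain b where b: "b \<in> M1" by blast
  define M2 where "M2 = M1 - {b}"
  have c2: "2 \<le> card M2" using c1 b by (simp add: card_Diff_singleton M2_def)
  then have "M2 \<noteq> {}" by auto
  then obtain c where c: "c \<in> M2" by blast
  define M3 where "M3 = M2 - {c}"
  have c3: "1 \<le> card M3" using c2 c by (simp add: card_Diff_singleton M3_def)
  then have "M3 \<noteq> {}" by auto
  then obtain d where d: "d \<in> M3" by blast
  show ?thesis using a b c d unfolding M1_def M2_def M3_def by blast
qed

lemma card_fibres:
  assumes "finite P" "\<forall>x\<in>P. card {y\<in>P. g y = g x} \<le> 3"
  shows "card P \<le> 3 * card (g ` P)"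
proof -
  have "card P = (\<Sum>z\<in>g ` P. card {y\<in>P. g y = z})"
    using sum.image_gen[OF assms(1), of "\<lambda>_. 1::nat" g] by (simp only: card_eq_sum)
  also have "\<dots> \<le> (\<Sum>z\<in>g ` P. 3)"
  proof (rule sum_mono)
    fix z assume "z \<in> g ` P"
    then obtain x where "x \<in> P" "z = g x" by blast
    then show "card {y\<in>P. g y = z} \<le> 3" using assms(2) by simp
  qed
  also have "\<dots> = 3 * card (g ` P)" by simp
  finally show ?thesis .
qed

lemma lv_bound:
  assumes I: "Inv ds P S X" and ob: "ob \<in> P" and nu: "\<not> unan ds ob"
  shows "lv ob < k"
proof -
  note D = InvD[OF I]
  obtain a1 where a1: "a1 \<in> A ds" "sd ob \<notin> cov ds a1" using nu unfolding unan_def by blast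
  obtain a2 where a2: "a2 \<in> A ds" "td ob \<notin> cov ds a2" using nu unfolding unan_def by blast
  have a2s: "sd ob \<in> cov ds a2" using D(5) a2 ob by blast
  define B where "B = {a\<in>A ds. sd ob \<in> cov ds a \<and> td ob \<in> cov ds a}"
  have cB: "lv ob \<le> card B" using D(6) ob unfolding B_def by blast
  have fB: "finite B" unfolding B_def using A_fin by simp
  have "a1 \<notin> B" "a2 \<notin> B" "a1 \<noteq> a2" using a1 a2 a2s unfolding B_def by auto
  then have "card (insert a1 (insert a2 B)) = card B + 2" using fB by simp
  moreover have "insert a1 (insert a2 B) \<subseteq> A ds" using a1 a2 unfolding B_def by auto
  ultimately have "card B + 2 \<le> card (A ds)" using A_fin by (metis card_mono)
  then show ?thesis using A_card[of ds] cB by linarith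
qed

definition normal :: "item list \<Rightarrow> obj set \<Rightarrow> bool" where
  "normal ds P \<longleftrightarrow> (\<forall>ob\<in>P. \<not> unan ds ob) \<and> (\<forall>ob\<in>P. card {ob2\<in>P. key ds ob2 = key ds ob} \<le> 3)"

lemma normalize:
  "Inv ds P S X \<Longrightarrow> \<exists>ds' P'. Inv ds' P' S X \<and> normal ds' P'"
proof (induction "card P" arbitrary: ds P rule: less_induct)
  case less
  note I = less.prems
  note D = InvD[OF I]
  show ?case
  proof (cases "\<exists>ob\<in>P. unan ds ob")
    case True
    then obtain ob where ob: "ob \<in> P" "unan ds ob" by blast
    then obtain x where x: "x = sd ob \<or> x = td ob" "\<forall>a\<in>A ds. x \<in> cov ds a"
      unfolding unan_def by blast
    have I': "Inv (ds @ [({x},{})]) (P - {ob}) S X"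
      by (rule T_close[OF I ob(1) x(1)]) (use x(2) in simp)
    have lt: "card (P - {ob}) < card P" using card_Diff1_less[OF D(2) ob(1)] .
    show ?thesis using less.hyps[OF lt I'] .
  next
    case nun: False
    show ?thesis
    proof (cases "\<exists>ob\<in>P. 3 < card {ob2\<in>P. key ds ob2 = key ds ob}")
      case True
      then obtain ob where ob: "ob \<in> P" "3 < card {ob2\<in>P. key ds ob2 = key ds ob}" by blast
      have "finite {ob2\<in>P. key ds ob2 = key ds ob}" using D(2) by simp
      have c4: "4 \<le> card {ob2\<in>P. key ds ob2 = key ds ob}" using ob(2) by simp
      obtain o1 o2 o3 o4 where os: "o1 \<in> {ob2\<in>P. key ds ob2 = key ds ob}"
        "o2 \<in> {ob2\<in>P. key ds ob2 = key ds ob}" "o3 \<in> {ob2\<in>P. key ds ob2 = key ds ob}"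
        "o4 \<in> {ob2\<in>P. key ds ob2 = key ds ob}"
        and dst: "o1 \<noteq> o2" "o1 \<noteq> o3" "o1 \<noteq> o4" "o2 \<noteq> o3" "o2 \<noteq> o4" "o3 \<noteq> o4"
        using four_elems[OF \<open>finite {ob2\<in>P. key ds ob2 = key ds ob}\<close> c4] by blast
      have oP: "o1 \<in> P" "o2 \<in> P" "o3 \<in> P" "o4 \<in> P" using os by auto
      have ks: "key ds o2 = key ds o1" "key ds o3 = key ds o1" "key ds o4 = key ds o1" using os by auto
      have nu: "\<not> unan ds o1" using nun oP by blast
      define P' where "P' = P - {o1,o2,o3,o4} \<union> {(Suc (lv o1), sd o1, sd o2), (Suc (lv o1), td o3, td o4)}"
      have I': "Inv (ds @ [({sd o1},{sd o2}), ({td o3},{td o4})]) P' S X"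
        unfolding P'_def by (rule T_join[OF I oP dst ks nu])
      have "card (P - {o1,o2,o3,o4}) = card P - 4"
      proof -
        have "{o1,o2,o3,o4} \<subseteq> P" using oP by auto
        moreover have "card {o1,o2,o3,o4} = 4" using dst by simp
        ultimately show ?thesis using D(2) by (simp add: card_Diff_subset)
      qed
      moreover have "card P' \<le> card (P - {o1,o2,o3,o4}) + 2"
      proof -
        have "card P' \<le> card (P - {o1,o2,o3,o4}) + card {(Suc (lv o1), sd o1, sd o2), (Suc (lv o1), td o3, td o4)}"
          unfolding P'_def by (rule card_Un_le)
        moreover have "card {(Suc (lv o1), sd o1, sd o2), (Suc (lv o1), td o3, td o4)} \<le> 2"
          by (simp add: card_insert_le_m1)
        ultimately show ?thesis by linarith
      qed
      moreover have "4 \<le> card P"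
      proof -
        have "{o1,o2,o3,o4} \<subseteq> P" using oP by auto
        moreover have "card {o1,o2,o3,o4} = 4" using dst by simp
        ultimately show ?thesis using D(2) by (metis card_mono)
      qed
      ultimately have lt: "card P' < card P" by linarith
      show ?thesis using less.hyps[OF lt I'] .
    next
      case False
      then have "normal ds P" using nun unfolding normal_def by (simp add: not_less)
      then show ?thesis using I by blast
    qed
  qed
qed

lemma normal_card:
  assumes I: "Inv ds P S X" and n: "normal ds P"
  shows "card P \<le> 3 * (k * 4 ^ k)"
proof -
  note D = InvD[OF I]
  define KS where "KS = {..<k} \<times> Pow (A ds) \<times> Pow (A ds)"
  have sub: "key ds ` P \<subseteq> KS"
  proof
    fix z assume "z \<in> key ds ` P"
    then obtain ob where ob: "ob \<in> P" "z = key ds ob" by blast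
    have "lv ob < k" using lv_bound[OF I ob(1)] n ob(1) unfolding normal_def by blast
    then show "z \<in> KS" unfolding KS_def ob(2) key_def by auto
  qed
  have fKS: "finite KS" unfolding KS_def using A_fin by simp
  have "card KS = k * (2 ^ card (A ds) * 2 ^ card (A ds))"
    unfolding KS_def using A_fin by (simp add: card_cartesian_product card_Pow)
  also have "\<dots> = k * 4 ^ card (A ds)" by (simp add: power_mult_distrib[symmetric])
  also have "\<dots> \<le> k * 4 ^ k" using A_card[of ds] by (simp add: power_increasing)
  finally have cKS: "card KS \<le> k * 4 ^ k" .
  have "card P \<le> 3 * card (key ds ` P)"
    by (rule card_fibres) (use D(2) n in \<open>simp_all add: normal_def\<close>)
  also have "\<dots> \<le> 3 * card KS" using card_mono[OF fKS sub] by simp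
  finally show ?thesis using cKS by linarith
qed

lemma close_all:
  "Inv ds P S X \<Longrightarrow> \<exists>ds'. Inv ds' {} S (X + card P)"
proof (induction "card P" arbitrary: ds P X rule: less_induct)
  case less
  note I = less.prems
  note D = InvD[OF I]
  show ?case
  proof (cases "P = {}")
    case True then have "X + card P = X" by simp
    then show ?thesis using I True by metis
  next
    case False
    then obtain ob where ob: "ob \<in> P" by blast
    have I': "Inv (ds @ [({sd ob},{})]) (P - {ob}) S (X + 1)"
      by (rule T_close[OF I ob]) simp_all
    have lt: "card (P - {ob}) < card P" using card_Diff1_less[OF D(2) ob] .
    obtain ds' where h: "Inv ds' {} S (X + 1 + card (P - {ob}))" using less.hyps[OF lt I'] by blast
    have "0 < card P" using D(2) ob card_gt_0_iff by blast
    then have eq: "X + 1 + card (P - {ob}) = X + card P"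
      using card_Diff_singleton[OF ob] by linarith
    from h have "Inv ds' {} S (X + card P)" by (simp only: eq)
    then show ?thesis by blast
  qed
qed

lemma seeds: "\<exists>ds P. Inv ds P N 0"
proof (induction N)
  case 0 then show ?case using Inv_init by blast
next
  case (Suc N)
  then obtain ds P where "Inv ds P N 0" by blast
  then show ?case using T_seed[OF \<open>Inv ds P N 0\<close>] by blast
qed


lemma finite_len: "finite {a :: bool list. length a = n}"
proof -
  have "finite {xs :: bool list. set xs \<subseteq> UNIV \<and> length xs = n}"
    by (rule finite_lists_length_eq) simp
  then show ?thesis by simp
qed

lemma opt_ge: "length \<sigma> = length ds \<Longrightarrow> sat_count ds \<sigma> \<le> opt_value ds"
  unfolding opt_value_def by (rule Max_ge) (use finite_len in auto)

lemma alg_attained: "\<exists>a\<in>A ds. alg_value A ds = sat_count ds a"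
proof -
  have "alg_value A ds \<in> sat_count ds ` A ds"
    unfolding alg_value_def by (rule Max_in) (simp_all add: A_fin A_ne)
  then show ?thesis by blast
qed

lemma opt_attained: "\<exists>\<sigma>. length \<sigma> = length ds \<and> opt_value ds = sat_count ds \<sigma>"
proof -
  have ne: "{a :: bool list. length a = length ds} \<noteq> {}"
    by (metis (mono_tags) empty_iff length_replicate mem_Collect_eq)
  have "opt_value ds \<in> sat_count ds ` {a. length a = length ds}"
    unfolding opt_value_def by (rule Max_in) (use finite_len ne in auto)
  then show ?thesis by blast
qed

lemma arith_final:
  fixes q K :: real
  assumes "1 \<le> q" "1 \<le> K"
  shows "((1 + (1 - 1 / q) / 3) * (6 * K * q) + K) / (2 * (6 * K * q)) = 2/3 - 1 / (12 * q)"
  using assms by (simp add: field_simps)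

lemma main_instance:
  "\<exists>ds. valid_instance ds \<and> 0 < opt_value ds \<and> ratio A ds \<le> 2/3 - 1 / (12 * 4 ^ k)"
proof -
  define K :: nat where "K = 3 * (k * 4 ^ k)"
  define N :: nat where "N = 6 * K * 4 ^ k"
  have K1: "1 \<le> K" using k_pos unfolding K_def by simp
  obtain ds0 P0 where I0: "Inv ds0 P0 N 0" using seeds by blast
  obtain ds1 P1 where I1: "Inv ds1 P1 N 0" and n1: "normal ds1 P1" using normalize[OF I0] by blast
  have cP1: "card P1 \<le> K" using normal_card[OF I1 n1] unfolding K_def .
  obtain ds where I: "Inv ds {} N (card P1)" using close_all[OF I1] by auto
  note D = InvD[OF I]
  have valid: "valid_instance ds"
    unfolding valid_instance_def
  proof
    fix d assume "d \<in> set ds"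
    then have "fst d \<subseteq> {..<2*N}" "snd d \<subseteq> {..<2*N}" "fst d \<inter> snd d = {}" using D(1) by auto
    then show "finite (fst d) \<and> finite (snd d) \<and> fst d \<inter> snd d = {}"
      using finite_subset by blast
  qed
  define AL :: real where "AL = (1 + cc 0) * N + K"
  have alg: "real (alg_value A ds) \<le> AL"
  proof -
    obtain a where a: "a \<in> A ds" "alg_value A ds = sat_count ds a" using alg_attained by blast
    have "pot ds {} a \<le> (1 + cc 0) * N + card P1" using D(7) a(1) by blast
    then have "real (card (cov ds a)) \<le> (1 + cc 0) * N + card P1" by (simp add: pot_def)
    moreover have "real (card P1) \<le> real K" using cP1 by simp
    ultimately show ?thesis using a(2) unfolding AL_def sat_count_cov by linarith
  qed
  obtain \<sigma> where \<sigma>: "length \<sigma> = length ds" "\<forall>c<2*N. c \<notin> side (\<lambda>_. True) ` {} \<longrightarrow> c \<in> cov ds \<sigma>"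
    using D(8) by blast
  have "{..<2*N} \<subseteq> cov ds \<sigma>" using \<sigma>(2) by auto
  then have "card {..<2*N} \<le> card (cov ds \<sigma>)" by (rule card_mono[OF Inv_cov_fin[OF I]])
  then have "2 * N \<le> card (cov ds \<sigma>)" by simp
  then have opt: "2 * N \<le> opt_value ds" using opt_ge[OF \<sigma>(1)] unfolding sat_count_cov by linarith
  have Npos: "0 < N" unfolding N_def using K1 by simp
  then have optpos: "0 < opt_value ds" using opt by linarith
  have AL0: "0 \<le> AL" unfolding AL_def using cc_nonneg[of 0] by simp
  have "ratio A ds = real (alg_value A ds) / real (opt_value ds)"
    unfolding ratio_def using optpos by simp
  also have "\<dots> \<le> AL / real (2 * N)"
    by (rule frac_le) (use AL0 alg opt Npos in simp_all)
  also have "\<dots> = 2/3 - 1 / (12 * 4 ^ k)"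
  proof -
    define q :: real where "q = 4 ^ k"
    have q1: "1 \<le> q" unfolding q_def by simp
    have cc0: "cc 0 = (1 - 1 / q) / 3" unfolding cc_def q_def by simp
    have NN: "real N = 6 * real K * q" unfolding N_def q_def by simp
    have "AL / real (2 * N) = ((1 + (1 - 1 / q) / 3) * (6 * real K * q) + real K) / (2 * (6 * real K * q))"
      unfolding AL_def cc0 NN[symmetric] by simp
    also have "\<dots> = 2/3 - 1 / (12 * q)" using arith_final[OF q1, of "real K"] K1 by simp
    finally show ?thesis unfolding q_def by simp
  qed
  finally show ?thesis using valid optpos by blast
qed


lemma pad1_alg: "alg_value A (ds @ [({},{})]) \<le> alg_value A ds"
proof -
  obtain a' where a': "a' \<in> A (ds @ [({},{})])" "alg_value A (ds @ [({},{})]) = sat_count (ds @ [({},{})]) a'"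
    using alg_attained by blast
  obtain a b where ab: "a' = a @ [b]" "a \<in> A ds" using A_step[OF a'(1)] by blast
  have "cov (ds @ [({},{})]) a' = cov ds a" unfolding ab(1) cov_snoc[OF A_len[OF ab(2)]] by simp
  then have "sat_count (ds @ [({},{})]) a' = sat_count ds a" by (simp add: sat_count_cov)
  also have "\<dots> \<le> alg_value A ds" unfolding alg_value_def
    by (rule Max_ge) (use A_fin ab(2) in auto)
  finally show ?thesis using a'(2) by simp
qed

lemma pad1_opt: "opt_value ds \<le> opt_value (ds @ [({},{})])"
proof -
  obtain \<sigma> where \<sigma>: "length \<sigma> = length ds" "opt_value ds = sat_count ds \<sigma>" using opt_attained by blast
  have "cov (ds @ [({},{})]) (\<sigma> @ [False]) = cov ds \<sigma>" unfolding cov_snoc[OF \<sigma>(1)] by simp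
  then have "sat_count ds \<sigma> = sat_count (ds @ [({},{})]) (\<sigma> @ [False])" by (simp add: sat_count_cov)
  also have "\<dots> \<le> opt_value (ds @ [({},{})])" by (rule opt_ge) (simp add: \<sigma>(1))
  finally show ?thesis using \<sigma>(2) by simp
qed

lemma pad_props:
  "alg_value A (ds @ replicate j ({},{})) \<le> alg_value A ds \<and>
   opt_value ds \<le> opt_value (ds @ replicate j ({},{}))"
proof (induction j)
  case 0 then show ?case by simp
next
  case (Suc j)
  have e: "ds @ replicate (Suc j) ({},{}) = (ds @ replicate j ({},{})) @ [({},{})]"
    by (simp add: replicate_append_same)
  show ?case unfolding e using Suc pad1_alg[of "ds @ replicate j ({},{})"]
      pad1_opt[of "ds @ replicate j ({},{})"] by linarith
qed

lemma pad_ratio: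
  assumes "0 < opt_value ds"
  shows "ratio A (ds @ replicate j ({},{})) \<le> ratio A ds"
proof -
  define ds' where "ds' = ds @ replicate j ({},{})"
  have p: "alg_value A ds' \<le> alg_value A ds" "opt_value ds \<le> opt_value ds'"
    using pad_props unfolding ds'_def by auto
  have o': "0 < opt_value ds'" using p(2) assms by linarith
  have "ratio A ds' = real (alg_value A ds') / real (opt_value ds')" unfolding ratio_def using o' by simp
  also have "\<dots> \<le> real (alg_value A ds) / real (opt_value ds)"
    by (rule frac_le) (use p assms in simp_all)
  also have "\<dots> = ratio A ds" unfolding ratio_def using assms by simp
  finally show ?thesis unfolding ds'_def .
qed

lemma pad_valid:
  assumes "valid_instance ds"
  shows "valid_instance (ds @ replicate j ({},{}))"
  using assms unfolding valid_instance_def by auto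

lemma asymp_lt: "asymp_ratio A < ereal (2/3)"
proof -
  define r0 :: real where "r0 = 2/3 - 1 / (12 * 4 ^ k)"
  obtain ds where ds: "valid_instance ds" "0 < opt_value ds" "ratio A ds \<le> r0"
    using main_instance unfolding r0_def by blast
  define f where "f = (\<lambda>n. INF ds \<in> {ds. valid_instance ds \<and> length ds = n}. ereal (ratio A ds))"
  have ev: "eventually (\<lambda>n. f n \<le> ereal r0) sequentially"
    unfolding eventually_sequentially
  proof (intro exI allI impI)
    fix n assume n: "length ds \<le> n"
    define ds' where "ds' = ds @ replicate (n - length ds) ({},{})"
    have mem: "ds' \<in> {ds. valid_instance ds \<and> length ds = n}"
      using pad_valid[OF ds(1)] n unfolding ds'_def by simp
    have "f n \<le> ereal (ratio A ds')" unfolding f_def by (rule INF_lower[OF mem])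
    also have "\<dots> \<le> ereal r0"
      using order_trans[OF pad_ratio[OF ds(2), of "n - length ds"] ds(3)] unfolding ds'_def by simp
    finally show "f n \<le> ereal r0" .
  qed
  have "asymp_ratio A = liminf f" unfolding asymp_ratio_def f_def ..
  also have "\<dots> \<le> liminf (\<lambda>_. ereal r0)" by (rule Liminf_mono[OF ev])
  also have "\<dots> = ereal r0" by (simp add: Liminf_const)
  also have "\<dots> < ereal (2/3)" unfolding r0_def by simp
  finally show ?thesis .
qed

end

theorem theorem3:
  fixes k :: nat and A :: "item list \<Rightarrow> bool list set"
  assumes "width_alg k A"
  shows "asymp_ratio A < ereal (2/3)"
proof -
  interpret walg k A by (unfold_locales) (rule assms)
  show ?thesis by (rule asymp_lt)
qed

end
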